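(* Let $p,m,n\ge1$, let $a_1,\dots,a_n\in\mathbb{C}$ be distinct, let $m_1,\dots,m_n\ge1$ be integers, let $C_0,\dots,C_{m-1}$, $B_k^{(j)}$ be complex $p\times p$ matrices, let $\|\cdot\|$ be any induced matrix norm, and let $$R(\lambda)=I\lambda^m-C_{m-1}\lambda^{m-1}-\cdots-C_1\lambda-C_0+\sum_{j=1}^{n}\sum_{k=1}^{m_j}\frac{B_k^{(j)}}{(\lambda-a_j)^k}.$$ If $\lambda_0$ is an eigenvalue of $R(\lambda)$, then: (1) $|\lambda_0|\le\max_{1\le j\le n}\Big\{1+|a_j|,\ \sum_{j=1}^n\sum_{k=1}^{m_j}\|B_k^{(j)}\|+\sum_{i=0}^{m-1}\|C_i\|\Big\}$; (2) if every $m_j=1$ (writing $B^{(j)}=B^{(j)}_1$), then $|\lambda_0|\le\max_{1\le j\le n,\,1\le i\le m-1}\{|a_j|+\|B^{(j)}\|,\ 1+\|C_i\|,\ \|C_0\|+n\}$; otherwise $|\lambda_0|\le\max_{1\le j\le n,\,1\le k\le m_j,\,1\le i\le m-1}\Big\{|a_j|+\|B_k^{(j)}\|,\ 1+|a_j|,\ 1+\|C_i\|,\ \|C_0\|+\sum_{j=1}^n m_j\Big\}$; (3) $|\lambda_0|\le\frac{\alpha+\beta+\sqrt{(\alpha-\beta)^2+(\gamma+\delta)^2}}{2}$, where $\alpha=\max_{1\le j\le n}\{|a_j|+\cos(\frac{\pi}{m_j+1})\}$, $\beta=w(\mathcal{B}_0)$, $\gamma=\sqrt{\sum_{j=1}^n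 m_j}$, $\delta=\sqrt{\sum_{j=1}^n\sum_{k=1}^{m_j}\|B_k^{(j)}\|^2}$, and $\mathcal{B}_0$ is the $m\times m$ real matrix with $1$'s on the superdiagonal, last row $(\|C_0\|,\|C_1\|,\dots,\|C_{m-1}\|)$, and zeros elsewhere.
   Context: A scalar $\lambda_0\in\mathbb{C}\setminus\{a_1,\dots,a_n\}$ is an eigenvalue of $R(\lambda)$ if there is a nonzero $v\in\mathbb{C}^p$ with $R(\lambda_0)v=0$. For a square complex matrix $A$, $w(A)=\sup\{|x^*Ax|:x^*x=1\}$ is its numerical radius. *)

theory Defs
  imports "HOL-Analysis.Analysis"
begin

definition smat :: "complex \<Rightarrow> complex^'p^'p \<Rightarrow> complex^'p^'p" where
  "smat c A = (\<chi> r s. c * A $ r $ s)"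

definition is_vec_norm :: "(complex^'p \<Rightarrow> real) \<Rightarrow> bool" where
  "is_vec_norm N \<longleftrightarrow>
     (\<forall>x. 0 \<le> N x) \<and> (\<forall>x. N x = 0 \<longleftrightarrow> x = 0) \<and>
     (\<forall>c x. N (c *s x) = cmod c * N x) \<and> (\<forall>x y. N (x + y) \<le> N x + N y)"

definition induced_norm :: "(complex^'p \<Rightarrow> real) \<Rightarrow> complex^'p^'p \<Rightarrow> real" where
  "induced_norm N A = (SUP x \<in> {x. x \<noteq> 0}. N (A *v x) / N x)"

definition Rmat :: "nat \<Rightarrow> (nat \<Rightarrow> complex^'p^'p) \<Rightarrow> nat \<Rightarrow> (nat \<Rightarrow> complex)
    \<Rightarrow> (nat \<Rightarrow> nat) \<Rightarrow> (nat \<Rightarrow> nat \<Rightarrow> complex^'p^'p) \<Rightarrow> complex \<Rightarrow> complex^'p^'p" where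
  "Rmat m C n a mj B l =
     smat (l ^ m) (mat 1) - (\<Sum>i<m. smat (l ^ i) (C i))
     + (\<Sum>j\<in>{1..n}. \<Sum>k\<in>{1..mj j}. smat (1 / (l - a j) ^ k) (B j k))"

definition is_eigenvalue_R :: "nat \<Rightarrow> (nat \<Rightarrow> complex^'p^'p) \<Rightarrow> nat \<Rightarrow> (nat \<Rightarrow> complex)
    \<Rightarrow> (nat \<Rightarrow> nat) \<Rightarrow> (nat \<Rightarrow> nat \<Rightarrow> complex^'p^'p) \<Rightarrow> complex \<Rightarrow> bool" where
  "is_eigenvalue_R m C n a mj B l \<longleftrightarrow>
     l \<notin> a ` {1..n} \<and> (\<exists>v::complex^'p. v \<noteq> 0 \<and> Rmat m C n a mj B l *v v = 0)"

definition num_radius :: "nat \<Rightarrow> (nat \<Rightarrow> nat \<Rightarrow> complex) \<Rightarrow> real" where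
  "num_radius m A = (SUP x \<in> {x :: nat \<Rightarrow> complex. (\<Sum>i<m. (cmod (x i))\<^sup>2) = 1}.
       cmod (\<Sum>r<m. \<Sum>s<m. cnj (x r) * A r s * x s))"

definition B0mat :: "nat \<Rightarrow> (nat \<Rightarrow> real) \<Rightarrow> nat \<Rightarrow> nat \<Rightarrow> real" where
  "B0mat m c r s = (if s = r + 1 then 1 else if r = m - 1 then c s else 0)"

end

theory Submission
  imports Defs
begin

lemma vn_zero: "is_vec_norm N \<Longrightarrow> N 0 = 0"
  unfolding is_vec_norm_def by blast

lemma vn_scale: "is_vec_norm N \<Longrightarrow> N (c *s x) = cmod c * N x"
  unfolding is_vec_norm_def by blast

lemma vn_tri: "is_vec_norm N \<Longrightarrow> N (x + y) \<le> N x + N y"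
  unfolding is_vec_norm_def by blast

lemma vn_nonneg: "is_vec_norm N \<Longrightarrow> 0 \<le> N x"
  unfolding is_vec_norm_def by blast

lemma vn_pos: "is_vec_norm N \<Longrightarrow> x \<noteq> 0 \<Longrightarrow> 0 < N x"
  unfolding is_vec_norm_def by (metis less_eq_real_def)

lemma vn_neg: "is_vec_norm N \<Longrightarrow> N (- x) = N x"
proof -
  assume h: "is_vec_norm N"
  have "- x = (-1) *s x" by (simp add: vec_eq_iff)
  then show ?thesis using vn_scale[OF h, of "-1" x] by simp
qed

lemma vn_diff: "is_vec_norm N \<Longrightarrow> N (x - y) \<le> N x + N y"
  using vn_tri[of N x "- y"] vn_neg[of N y] by simp

lemma vn_sum: "is_vec_norm N \<Longrightarrow> N (\<Sum>i\<in>S. f i) \<le> (\<Sum>i\<in>S. N (f i))"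
proof (induction S rule: infinite_finite_induct)
  case (infinite A) then show ?case by (simp add: vn_zero)
next
  case empty then show ?case by (simp add: vn_zero)
next
  case (insert x F)
  then show ?case using vn_tri[of N "f x" "sum f F"] by simp
qed

lemma vn_comb: assumes h: "is_vec_norm N"
  shows "N (\<Sum>i\<in>UNIV. x $ i *s w i) \<le> norm x * (\<Sum>i\<in>UNIV. N (w i))"
proof -
  have "N (\<Sum>i\<in>UNIV. x $ i *s w i) \<le> (\<Sum>i\<in>UNIV. N (x $ i *s w i))" by (rule vn_sum[OF h])
  also have "\<dots> = (\<Sum>i\<in>UNIV. cmod (x $ i) * N (w i))" by (simp add: vn_scale[OF h])
  also have "\<dots> \<le> (\<Sum>i\<in>UNIV. norm x * N (w i))"
    apply (intro sum_mono mult_right_mono vn_nonneg[OF h])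
    using Finite_Cartesian_Product.norm_nth_le[of x] apply simp
    done
  finally show ?thesis by (simp add: sum_distrib_left)
qed

lemma vn_upper: assumes h: "is_vec_norm N"
  shows "\<exists>K\<ge>0. \<forall>x. N x \<le> K * norm x"
proof -
  have "N x \<le> (\<Sum>i\<in>UNIV. N (axis i 1)) * norm x" for x
    using vn_comb[OF h, of x "\<lambda>i. axis i 1"] by (simp add: basis_expansion mult.commute)
  moreover have "0 \<le> (\<Sum>i\<in>UNIV. N (axis i (1::complex)))" by (rule sum_nonneg, rule vn_nonneg[OF h])
  ultimately show ?thesis by blast
qed

lemma vn_lower: assumes h: "is_vec_norm N"
  shows "\<exists>c>0. \<forall>x. c * norm x \<le> N x"
proof -
  obtain K where K: "K \<ge> 0" "\<And>x. N x \<le> K * norm x" using vn_upper[OF h] by blast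
  have lip: "K-lipschitz_on (sphere 0 1) N"
    unfolding lipschitz_on_def
  proof (intro conjI ballI)
    fix x y :: "complex^'a"
    have "N x \<le> N (x - y) + N y" using vn_tri[OF h, of "x - y" y] by simp
    moreover have "N y \<le> N (y - x) + N x" using vn_tri[OF h, of "y - x" x] by simp
    moreover have "N (y - x) = N (x - y)" using vn_neg[OF h, of "x - y"] by simp
    moreover have "N (x - y) \<le> K * dist x y" using K(2)[of "x - y"] by (simp add: dist_norm)
    ultimately show "dist (N x) (N y) \<le> K * dist x y" by (simp add: dist_real_def abs_le_iff)
  qed (rule K(1))
  have ne: "sphere (0::complex^'a) 1 \<noteq> {}"
  proof -
    define z :: "complex^'a" where "z = axis undefined 1"
    have "z \<noteq> 0" by (simp add: z_def)
    then have "norm ((1 / norm z) *\<^sub>R z) = 1" by simp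
    then show ?thesis unfolding sphere_def by (metis (mono_tags, lifting) dist_0_norm empty_Collect_eq)
  qed
  obtain x0 where x0: "x0 \<in> sphere 0 1" "\<And>y. y \<in> sphere 0 1 \<Longrightarrow> N x0 \<le> N y"
    using continuous_attains_inf[OF compact_sphere ne lipschitz_on_continuous_on[OF lip]] by blast
  have "x0 \<noteq> 0" using x0(1) by auto
  then have c0: "N x0 > 0" by (rule vn_pos[OF h])
  have "N x0 * norm x \<le> N x" for x
  proof (cases "x = 0")
    case True then show ?thesis by (simp add: vn_zero[OF h])
  next
    case False
    define y where "y = complex_of_real (1 / norm x) *s x"
    have yR: "y = (1 / norm x) *\<^sub>R x"
    unfolding vec_eq_iff proof (intro allI)
      fix i
      have "((1 / norm x) *\<^sub>R x) $ i = (1 / norm x) *\<^sub>R (x $ i)" by (simp only: vector_scaleR_component)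
      also have "\<dots> = complex_of_real (1 / norm x) * x $ i" by (simp only: scaleR_conv_of_real)
      finally show "y $ i = ((1 / norm x) *\<^sub>R x) $ i" by (simp add: y_def)
    qed
    have ny: "norm y = 1" using False by (simp add: yR)
    have "N y = (1 / norm x) * N x" using vn_scale[OF h, of "complex_of_real (1 / norm x)" x]
      by (simp add: y_def norm_divide)
    moreover have "N x0 \<le> N y" using x0(2) ny by simp
    ultimately have "N x0 \<le> N x / norm x" by simp
    then show ?thesis using False by (simp add: field_simps)
  qed
  then show ?thesis using c0 by (metis mult.commute)
qed

lemma vn_ratio_bdd: assumes h: "is_vec_norm N"
  shows "\<exists>M. \<forall>x. x \<noteq> 0 \<longrightarrow> N (A *v x) / N x \<le> M"
proof -
  obtain c where c: "c > 0" "\<And>x. c * norm x \<le> N x" using vn_lower[OF h] by blast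
  define M where "M = (\<Sum>i\<in>UNIV. N (A *v axis i 1))"
  have "N (A *v x) \<le> norm x * M" for x
  proof -
    have "A *v x = (\<Sum>i\<in>UNIV. x $ i *s (A *v axis i 1))"
      by (subst (1) basis_expansion[symmetric]) (simp add: vec.sum vector_scalar_commute)
    then show ?thesis using vn_comb[OF h, of x "\<lambda>i. A *v axis i 1"] by (simp add: M_def)
  qed
  have M0: "M \<ge> 0" unfolding M_def by (rule sum_nonneg, rule vn_nonneg[OF h])
  have "N (A *v x) / N x \<le> M / c" if "x \<noteq> 0" for x
  proof -
    have p: "N x > 0" using vn_pos[OF h that] .
    have "N (A *v x) \<le> norm x * M" by fact
    also have "\<dots> \<le> (N x / c) * M" using c M0 by (intro mult_right_mono) (simp_all add: field_simps mult.commute)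
    finally show ?thesis using p c by (simp add: field_simps)
  qed
  then show ?thesis by blast
qed

lemma induced_norm_bound: assumes h: "is_vec_norm N"
  shows "N (A *v x) \<le> induced_norm N A * N x"
proof (cases "x = 0")
  case True then show ?thesis by (simp add: vn_zero[OF h])
next
  case False
  obtain M where M: "\<And>x. x \<noteq> 0 \<Longrightarrow> N (A *v x) / N x \<le> M" using vn_ratio_bdd[OF h] by blast
  have "N (A *v x) / N x \<le> induced_norm N A"
    unfolding induced_norm_def
    by (rule cSUP_upper) (use False M in \<open>auto intro!: bdd_aboveI2\<close>)
  then show ?thesis using vn_pos[OF h False] by (simp add: field_simps)
qed

lemma induced_norm_nonneg: assumes h: "is_vec_norm N"
  shows "0 \<le> induced_norm N (A::complex^'p^'p)"
proof -
  define x :: "complex^'p" where "x = axis undefined 1"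
  have x0: "x \<noteq> 0" by (simp add: x_def axis_eq_0_iff)
  have "0 \<le> N (A *v x) / N x" using vn_nonneg[OF h] by simp
  also have "\<dots> \<le> induced_norm N A" using induced_norm_bound[OF h, of A x] vn_pos[OF h x0]
    by (simp add: field_simps)
  finally show ?thesis .
qed

lemma smat_mult: "smat c A *v v = c *s (A *v v)"
  by (simp add: smat_def vec_eq_iff matrix_vector_mult_def sum_distrib_left mult.assoc)

lemma sum_mat_mult: "(\<Sum>i\<in>S. f i) *v v = (\<Sum>i\<in>S. f i *v v)"
proof (induction S rule: infinite_finite_induct)
  case (insert x F) then show ?case by (simp add: matrix_vector_mult_add_rdistrib)
qed (simp_all add: matrix_vector_mult_def vec_eq_iff)

lemma vn_sum_le: assumes h: "is_vec_norm N" and le: "\<And>i. i \<in> S \<Longrightarrow> N (f i) \<le> g i"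
  shows "N (\<Sum>i\<in>S. f i) \<le> (\<Sum>i\<in>S. g i)"
  using vn_sum[OF h, of f S] sum_mono[of S "\<lambda>i. N (f i)" g] le by (meson order_trans)

lemma key_ineq:
  assumes h: "is_vec_norm N" and ev: "is_eigenvalue_R m C n a mj B l"
  shows "cmod l ^ m \<le> (\<Sum>i<m. induced_norm N (C i) * cmod l ^ i)
     + (\<Sum>j\<in>{1..n}. \<Sum>k\<in>{1..mj j}. induced_norm N (B j k) / cmod (l - a j) ^ k)"
proof -
  obtain v where v: "v \<noteq> 0" "Rmat m C n a mj B l *v v = 0" using ev unfolding is_eigenvalue_R_def by blast
  define P where "P = (\<Sum>i<m. l ^ i *s (C i *v v))"
  define Q where "Q = (\<Sum>j\<in>{1..n}. \<Sum>k\<in>{1..mj j}. (1 / (l - a j) ^ k) *s (B j k *v v))"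
  have "Rmat m C n a mj B l *v v = l ^ m *s v - P + Q"
    unfolding Rmat_def P_def Q_def
    by (simp add: matrix_vector_mult_add_rdistrib matrix_vector_mult_diff_rdistrib sum_mat_mult smat_mult)
  with v have eq: "l ^ m *s v = P - Q" by (simp add: algebra_simps)
  have Nv: "N v > 0" using vn_pos[OF h v(1)] .
  have "N (l ^ m *s v) = cmod l ^ m * N v" by (simp add: vn_scale[OF h] norm_power)
  moreover have "N (P - Q) \<le> N P + N Q" by (rule vn_diff[OF h])
  moreover have "N P \<le> (\<Sum>i<m. induced_norm N (C i) * cmod l ^ i) * N v"
    unfolding P_def sum_distrib_right
  proof (rule vn_sum_le[OF h])
    fix i assume "i \<in> {..<m}"
    have "N (C i *v v) \<le> induced_norm N (C i) * N v" by (rule induced_norm_bound[OF h])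
    then have "cmod l ^ i * N (C i *v v) \<le> cmod l ^ i * (induced_norm N (C i) * N v)"
      by (simp add: mult_left_mono)
    then show "N (l ^ i *s (C i *v v)) \<le> induced_norm N (C i) * cmod l ^ i * N v"
      by (simp add: vn_scale[OF h] norm_power mult_ac)
  qed
  moreover have "N Q \<le> (\<Sum>j\<in>{1..n}. \<Sum>k\<in>{1..mj j}. induced_norm N (B j k) / cmod (l - a j) ^ k) * N v"
    unfolding Q_def sum_distrib_right
    apply (rule vn_sum_le[OF h])
    apply (rule vn_sum_le[OF h])
    apply (simp add: vn_scale[OF h] norm_power norm_divide)
    using induced_norm_bound[OF h] by (simp add: divide_right_mono)
  ultimately have "cmod l ^ m * N v \<le> ((\<Sum>i<m. induced_norm N (C i) * cmod l ^ i)
     + (\<Sum>j\<in>{1..n}. \<Sum>k\<in>{1..mj j}. induced_norm N (B j k) / cmod (l - a j) ^ k)) * N v"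
    using eq by (simp add: distrib_right)
  then show ?thesis using Nv by simp
qed

lemma part1_real:
  fixes \<rho> :: real and c :: "nat \<Rightarrow> real" and b :: "nat \<Rightarrow> nat \<Rightarrow> real" and d A :: "nat \<Rightarrow> real"
  assumes K: "\<rho> ^ m \<le> (\<Sum>i<m. c i * \<rho> ^ i) + (\<Sum>j\<in>{1..n}. \<Sum>k\<in>{1..mj j}. b j k / d j ^ k)"
    and m1: "m \<ge> 1" and n1: "n \<ge> 1"
    and c0: "\<And>i. c i \<ge> 0" and b0: "\<And>j k. b j k \<ge> 0" and A0: "\<And>j. A j \<ge> 0"
    and dA: "\<And>j. d j \<ge> \<rho> - A j"
  shows "\<rho> \<le> max (Max ((\<lambda>j. 1 + A j) ` {1..n}))
        ((\<Sum>j\<in>{1..n}. \<Sum>k\<in>{1..mj j}. b j k) + (\<Sum>i<m. c i))"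
proof (rule ccontr)
  assume "\<not> ?thesis"
  then have h1: "\<rho> > Max ((\<lambda>j. 1 + A j) ` {1..n})"
    and h2: "\<rho> > (\<Sum>j\<in>{1..n}. \<Sum>k\<in>{1..mj j}. b j k) + (\<Sum>i<m. c i)" by auto
  have hj: "\<rho> > 1 + A j" if "j \<in> {1..n}" for j
    using h1 Max_ge[of "(\<lambda>j. 1 + A j) ` {1..n}" "1 + A j"] that by force
  have "1 \<in> {1..n}" using n1 by simp
  from hj[OF this] A0[of 1] have r1: "\<rho> > 1" by linarith
  define q where "q = \<rho> ^ (m - 1)"
  have q1: "q \<ge> 1" unfolding q_def using r1 by simp
  have "(\<Sum>i<m. c i * \<rho> ^ i) \<le> (\<Sum>i<m. c i * q)"
    unfolding q_def using r1 c0 by (intro sum_mono mult_left_mono power_increasing) auto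
  moreover have "(\<Sum>j\<in>{1..n}. \<Sum>k\<in>{1..mj j}. b j k / d j ^ k) \<le> (\<Sum>j\<in>{1..n}. \<Sum>k\<in>{1..mj j}. b j k * q)"
  proof (intro sum_mono)
    fix j k assume j: "j \<in> {1..n}" and k: "k \<in> {1..mj j}"
    have "d j \<ge> 1" using hj[OF j] dA[of j] by linarith
    then have "d j ^ k \<ge> 1" by simp
    then have "b j k / d j ^ k \<le> b j k" using b0[of j k] by (simp add: divide_le_eq mult_le_cancel_left1)
    also have "\<dots> \<le> b j k * q" using b0[of j k] q1 by (simp add: mult_le_cancel_left1)
    finally show "b j k / d j ^ k \<le> b j k * q" .
  qed
  ultimately have "\<rho> ^ m \<le> ((\<Sum>j\<in>{1..n}. \<Sum>k\<in>{1..mj j}. b j k) + (\<Sum>i<m. c i)) * q"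
    using K by (simp add: sum_distrib_right distrib_right)
  also have "\<dots> < \<rho> * q" using h2 q1 by simp
  also have "\<rho> * q = \<rho> ^ m" unfolding q_def using m1 by (simp add: power_eq_if)
  finally show False by simp
qed

lemma telescope: "(\<Sum>i\<in>{1..<Suc m'}. ((\<rho>::real) - 1) * \<rho> ^ i) = \<rho> ^ Suc m' - \<rho>"
  by (induction m') (simp_all add: algebra_simps)

lemma part2_real:
  fixes \<rho> :: real and c :: "nat \<Rightarrow> real"
  assumes K: "\<rho> ^ m \<le> (\<Sum>i<m. c i * \<rho> ^ i) + X"
    and m1: "m \<ge> 1" and r0: "\<rho> \<ge> 0"
    and ci: "\<And>i. i \<in> {1..m-1} \<Longrightarrow> c i \<le> \<rho> - 1"
    and XS: "X \<le> S" and cS: "c 0 + S < \<rho>"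
  shows False
proof -
  obtain m' where mm: "m = Suc m'" using m1 by (cases m) auto
  have split: "(\<Sum>i<m. c i * \<rho> ^ i) = c 0 + (\<Sum>i\<in>{1..<Suc m'}. c i * \<rho> ^ i)"
    unfolding mm by (simp add: lessThan_atLeast0 sum.atLeast_Suc_lessThan)
  have "(\<Sum>i\<in>{1..<Suc m'}. c i * \<rho> ^ i) \<le> (\<Sum>i\<in>{1..<Suc m'}. (\<rho> - 1) * \<rho> ^ i)"
    using ci r0 unfolding mm by (intro sum_mono mult_right_mono) auto
  then have "\<rho> ^ m \<le> c 0 + (\<rho> ^ m - \<rho>) + S" using K split XS telescope[of \<rho> m'] mm by simp
  then show False using cS by simp
qed

lemma amgm_w: fixes p q x y :: real assumes "p > 0" "q > 0"
  shows "x * y \<le> (p / q) * x\<^sup>2 / 2 + (q / p) * y\<^sup>2 / 2"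
proof -
  have "0 \<le> (p * x - q * y)\<^sup>2" by simp
  then have "2 * p * q * x * y \<le> p\<^sup>2 * x\<^sup>2 + q\<^sup>2 * y\<^sup>2" by (simp add: power2_eq_square algebra_simps)
  then show ?thesis using assms by (simp add: field_simps power2_eq_square)
qed

lemma path_ineq:
  fixes y :: "nat \<Rightarrow> real"
  assumes y0: "y 0 = 0" and M1: "M \<ge> 1"
  shows "(\<Sum>k\<in>{1..M}. y k * y (k - 1)) \<le> cos (pi / (real M + 1)) * (\<Sum>k\<in>{1..M}. (y k)\<^sup>2)"
proof -
  define \<theta> where "\<theta> = pi / (real M + 1)"
  define w where "w k = sin (real k * \<theta>)" for k :: nat
  define r where "r k = w (k - 1) / w k" for k
  define s where "s k = w (Suc k) / w k" for k
  have wpos: "w k > 0" if "k \<in> {1..M}" for k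
  proof -
    have "real k * \<theta> > 0" using that by (simp add: \<theta>_def)
    moreover have "real k * \<theta> < pi"
    proof -
      have "pi * real k \<le> pi * real M" using that by (intro mult_left_mono) auto
      then have "pi * real k < pi + pi * real M" using pi_gt_zero by linarith
      then show ?thesis using that by (simp add: \<theta>_def field_simps)
    qed
    ultimately show ?thesis unfolding w_def by (simp add: sin_gt_zero)
  qed
  have w0: "w 0 = 0" by (simp add: w_def)
  have wM: "w (Suc M) = 0"
  proof -
    have "real (Suc M) * \<theta> = pi" by (simp add: \<theta>_def field_simps)
    then show ?thesis by (simp add: w_def)
  qed
  have rs: "r k + s k = 2 * cos \<theta>" if "k \<in> {1..M}" for k
  proof -
    have e1: "real (k - 1) * \<theta> = real k * \<theta> - \<theta>" using that by (simp add: of_nat_diff algebra_simps)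
    have e2: "real (Suc k) * \<theta> = real k * \<theta> + \<theta>" by (simp add: algebra_simps)
    have "w (k - 1) + w (Suc k) = 2 * cos \<theta> * w k"
      unfolding w_def e1 e2 sin_diff sin_add by simp
    then show ?thesis unfolding r_def s_def using wpos[OF that] by (simp add: field_simps)
  qed
  have termk: "y k * y (k - 1) \<le> r k * (y k)\<^sup>2 / 2 + s (k - 1) * (y (k - 1))\<^sup>2 / 2" if "k \<in> {1..M}" for k
  proof (cases "k = 1")
    case True then show ?thesis using y0 by (simp add: r_def s_def w0)
  next
    case False
    then have km: "k - 1 \<in> {1..M}" using that by auto
    show ?thesis unfolding r_def s_def using amgm_w[OF wpos[OF km] wpos[OF that], of "y k" "y (k - 1)"]
      False that by simp
  qed
  have "(\<Sum>k\<in>{1..M}. y k * y (k - 1)) \<le> (\<Sum>k\<in>{1..M}. r k * (y k)\<^sup>2 / 2) + (\<Sum>k\<in>{1..M}. s (k - 1) * (y (k - 1))\<^sup>2 / 2)"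
    unfolding sum.distrib[symmetric] by (rule sum_mono) (rule termk)
  also have "(\<Sum>k\<in>{1..M}. s (k - 1) * (y (k - 1))\<^sup>2 / 2) = (\<Sum>k\<in>{1..M}. s k * (y k)\<^sup>2 / 2)"
  proof -
    obtain M' where MM: "M = Suc M'" using M1 by (cases M) auto
    have "(\<Sum>k\<in>{1..M}. s (k - 1) * (y (k - 1))\<^sup>2 / 2) = (\<Sum>k\<in>{0..M'}. s k * (y k)\<^sup>2 / 2)"
      unfolding MM using sum.shift_bounds_cl_Suc_ivl[of "\<lambda>k. s (k - 1) * (y (k - 1))\<^sup>2 / 2" 0 M'] by simp
    also have "\<dots> = (\<Sum>k\<in>{0..M}. s k * (y k)\<^sup>2 / 2)"
      unfolding MM by (simp add: s_def wM[unfolded MM])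
    also have "\<dots> = (\<Sum>k\<in>{1..M}. s k * (y k)\<^sup>2 / 2)"
      by (simp add: sum.atLeast_Suc_atMost y0)
    finally show ?thesis .
  qed
  also have "(\<Sum>k\<in>{1..M}. r k * (y k)\<^sup>2 / 2) + (\<Sum>k\<in>{1..M}. s k * (y k)\<^sup>2 / 2)
     = (\<Sum>k\<in>{1..M}. (r k + s k) / 2 * (y k)\<^sup>2)"
    by (simp add: sum.distrib[symmetric] algebra_simps add_divide_distrib)
  also have "\<dots> = (\<Sum>k\<in>{1..M}. cos \<theta> * (y k)\<^sup>2)"
    by (rule sum.cong) (simp_all add: rs)
  finally show ?thesis by (simp add: \<theta>_def sum_distrib_left)
qed

lemma num_radius_quad:
  fixes Mr :: "nat \<Rightarrow> nat \<Rightarrow> real" and u :: "nat \<Rightarrow> real"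
  assumes pos: "0 < (\<Sum>i<m. (u i)\<^sup>2)"
  shows "(\<Sum>r<m. \<Sum>s<m. u r * Mr r s * u s) \<le> num_radius m (\<lambda>r s. complex_of_real (Mr r s)) * (\<Sum>i<m. (u i)\<^sup>2)"
proof -
  define A2 where "A2 = (\<Sum>i<m. (u i)\<^sup>2)"
  define a where "a = sqrt A2"
  have a0: "a > 0" using pos by (simp add: a_def A2_def)
  have aa: "a\<^sup>2 = A2" using pos by (simp add: a_def A2_def)
  define x where "x i = complex_of_real (u i / a)" for i
  define F where "F x = cmod (\<Sum>r<m. \<Sum>s<m. cnj (x r) * complex_of_real (Mr r s) * x s)" for x :: "nat \<Rightarrow> complex"
  define U where "U = {x :: nat \<Rightarrow> complex. (\<Sum>i<m. (cmod (x i))\<^sup>2) = 1}"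
  have xi: "(cmod (x i))\<^sup>2 = (u i)\<^sup>2 / A2" for i
    unfolding x_def norm_of_real using aa by (simp add: power_divide)
  have xU: "x \<in> U" unfolding U_def using pos
    by (simp add: xi sum_divide_distrib[symmetric] A2_def)
  have bdd: "bdd_above (F ` U)"
  proof (rule bdd_aboveI2)
    fix z assume z: "z \<in> U"
    have le1: "cmod (z i) \<le> 1" if "i < m" for i
    proof -
      have "(cmod (z i))\<^sup>2 \<le> (\<Sum>i<m. (cmod (z i))\<^sup>2)"
        by (rule member_le_sum) (use that in auto)
      then have "(cmod (z i))\<^sup>2 \<le> 1" using z by (simp add: U_def)
      then show ?thesis by (simp add: power_le_one_iff abs_le_square_iff[symmetric])
    qed
    have "F z \<le> (\<Sum>r<m. \<Sum>s<m. cmod (cnj (z r) * complex_of_real (Mr r s) * z s))"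
      unfolding F_def by (rule order_trans[OF norm_sum sum_mono]) (rule norm_sum)
    also have "\<dots> \<le> (\<Sum>r<m. \<Sum>s<m. \<bar>Mr r s\<bar>)"
    proof (intro sum_mono)
      fix r s assume "r \<in> {..<m}" "s \<in> {..<m}"
      then have "cmod (z r) \<le> 1" "cmod (z s) \<le> 1" using le1 by auto
      then show "cmod (cnj (z r) * complex_of_real (Mr r s) * z s) \<le> \<bar>Mr r s\<bar>"
        by (simp add: norm_mult) (metis abs_ge_zero mult_left_le mult_le_one norm_ge_zero mult.commute mult.assoc)
    qed
    finally show "F z \<le> (\<Sum>r<m. \<Sum>s<m. \<bar>Mr r s\<bar>)" .
  qed
  have "F x \<le> num_radius m (\<lambda>r s. complex_of_real (Mr r s))"
    unfolding num_radius_def F_def[symmetric] U_def[symmetric] by (rule cSUP_upper[OF xU bdd])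
  moreover have "F x = \<bar>\<Sum>r<m. \<Sum>s<m. u r * Mr r s * u s\<bar> / A2"
  proof -
    have "(\<Sum>r<m. \<Sum>s<m. cnj (x r) * complex_of_real (Mr r s) * x s)
        = (\<Sum>r<m. \<Sum>s<m. complex_of_real (u r * Mr r s * u s / A2))"
      by (intro sum.cong refl) (simp add: x_def aa[symmetric] power2_eq_square)
    also have "\<dots> = complex_of_real ((\<Sum>r<m. \<Sum>s<m. u r * Mr r s * u s) / A2)"
      by (simp only: of_real_sum[symmetric] sum_divide_distrib)
    finally have "F x = \<bar>(\<Sum>r<m. \<Sum>s<m. u r * Mr r s * u s) / A2\<bar>" by (simp only: F_def norm_of_real)
    then show ?thesis using pos by (simp add: A2_def)
  qed
  moreover have "(\<Sum>r<m. \<Sum>s<m. u r * Mr r s * u s) / A2 \<le> \<bar>\<Sum>r<m. \<Sum>s<m. u r * Mr r s * u s\<bar> / A2"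
    using pos unfolding A2_def by (intro divide_right_mono) auto
  ultimately have "(\<Sum>r<m. \<Sum>s<m. u r * Mr r s * u s) / A2 \<le> num_radius m (\<lambda>r s. complex_of_real (Mr r s))"
    by linarith
  then show ?thesis using pos by (simp add: A2_def field_simps)
qed

lemma two_by_two:
  fixes \<alpha> \<beta> c A2 T2 \<rho> :: real
  assumes h: "\<rho> * (A2 + T2) \<le> \<beta> * A2 + \<alpha> * T2 + c * (sqrt A2 * sqrt T2)"
    and c0: "c \<ge> 0" and A0: "A2 > 0" and T0: "T2 \<ge> 0"
  shows "\<rho> \<le> (\<alpha> + \<beta> + sqrt ((\<alpha> - \<beta>)\<^sup>2 + c\<^sup>2)) / 2"
proof -
  define sr where "sr = sqrt ((\<alpha> - \<beta>)\<^sup>2 + c\<^sup>2)"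
  define L where "L = (\<alpha> + \<beta> + sr) / 2"
  have sr2: "sr\<^sup>2 = (\<alpha> - \<beta>)\<^sup>2 + c\<^sup>2" unfolding sr_def by simp
  have sr0: "sr \<ge> 0" unfolding sr_def by simp
  have "\<bar>\<alpha> - \<beta>\<bar> \<le> sr" unfolding sr_def by (rule real_le_rsqrt) simp
  then have p0: "L - \<beta> \<ge> 0" and q0: "L - \<alpha> \<ge> 0" unfolding L_def by (simp_all add: abs_le_iff)
  have pq: "(L - \<beta>) * (L - \<alpha>) = c\<^sup>2 / 4"
    unfolding L_def using sr2 by (simp add: field_simps power2_eq_square)
  have spq: "sqrt (L - \<beta>) * sqrt (L - \<alpha>) = c / 2"
  proof -
    have "sqrt (L - \<beta>) * sqrt (L - \<alpha>) = sqrt ((c / 2)\<^sup>2)"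
      by (simp only: real_sqrt_mult[symmetric] pq power_divide) simp
    then show ?thesis using c0 by simp
  qed
  define a where "a = sqrt A2"
  define b where "b = sqrt T2"
  have "0 \<le> (sqrt (L - \<beta>) * a - sqrt (L - \<alpha>) * b)\<^sup>2" by simp
  then have "2 * (sqrt (L - \<beta>) * sqrt (L - \<alpha>)) * a * b \<le> (L - \<beta>) * a\<^sup>2 + (L - \<alpha>) * b\<^sup>2"
    using p0 q0 by (simp add: power2_eq_square algebra_simps)
  then have "c * (a * b) \<le> (L - \<beta>) * A2 + (L - \<alpha>) * T2"
    using spq A0 T0 by (simp add: a_def b_def mult.assoc)
  then have "\<rho> * (A2 + T2) \<le> L * (A2 + T2)" using h by (simp add: a_def b_def algebra_simps)
  then have "\<rho> \<le> L" using A0 T0 by (simp add: mult_le_cancel_right)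
  then show ?thesis by (simp add: L_def sr_def)
qed

lemma row_ineq:
  fixes \<rho> X :: real and c :: "nat \<Rightarrow> real"
  assumes r0: "\<rho> \<ge> 0" and K: "\<rho> ^ Suc m' \<le> (\<Sum>i<Suc m'. c i * \<rho> ^ i) + X"
  shows "\<rho> * (\<Sum>i<Suc m'. (\<rho> ^ i)\<^sup>2) \<le> (\<Sum>r<Suc m'. \<Sum>s<Suc m'. \<rho> ^ r * B0mat (Suc m') c r s * \<rho> ^ s) + \<rho> ^ m' * X"
proof -
  have inner: "(\<Sum>s<Suc m'. \<rho> ^ r * B0mat (Suc m') c r s * \<rho> ^ s) = \<rho> ^ r * \<rho> ^ Suc r" if "r < m'" for r
  proof -
    have "(\<Sum>s<Suc m'. \<rho> ^ r * B0mat (Suc m') c r s * \<rho> ^ s) = (\<Sum>s<Suc m'. if s = Suc r then \<rho> ^ r * \<rho> ^ Suc r else 0)"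
      using that by (intro sum.cong refl) (auto simp: B0mat_def)
    also have "\<dots> = \<rho> ^ r * \<rho> ^ Suc r" using that by (simp add: sum.delta')
    finally show ?thesis .
  qed
  have last: "(\<Sum>s<Suc m'. \<rho> ^ m' * B0mat (Suc m') c m' s * \<rho> ^ s) = \<rho> ^ m' * (\<Sum>s<Suc m'. c s * \<rho> ^ s)"
    unfolding sum_distrib_left by (intro sum.cong refl) (simp add: B0mat_def mult_ac)
  define G where "G r = (\<Sum>s<Suc m'. \<rho> ^ r * B0mat (Suc m') c r s * \<rho> ^ s)" for r
  have "(\<Sum>r<Suc m'. G r) = (\<Sum>r<m'. G r) + G m'" by (rule sum.lessThan_Suc)
  also have "(\<Sum>r<m'. G r) = (\<Sum>r<m'. \<rho> ^ r * \<rho> ^ Suc r)"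
    by (rule sum.cong[OF refl]) (unfold G_def, rule inner, simp)
  also have "G m' = \<rho> ^ m' * (\<Sum>s<Suc m'. c s * \<rho> ^ s)" unfolding G_def by (rule last)
  finally have "(\<Sum>r<Suc m'. \<Sum>s<Suc m'. \<rho> ^ r * B0mat (Suc m') c r s * \<rho> ^ s)
      = (\<Sum>r<m'. \<rho> ^ r * \<rho> ^ Suc r) + \<rho> ^ m' * (\<Sum>s<Suc m'. c s * \<rho> ^ s)"
    unfolding G_def .
  moreover have "\<rho> * (\<Sum>i<Suc m'. (\<rho> ^ i)\<^sup>2) = (\<Sum>r<m'. \<rho> ^ r * \<rho> ^ Suc r) + \<rho> ^ m' * \<rho> ^ Suc m'"
    by (simp add: sum_distrib_left power2_eq_square distrib_left mult_ac)
  moreover have "\<rho> ^ m' * \<rho> ^ Suc m' \<le> \<rho> ^ m' * ((\<Sum>s<Suc m'. c s * \<rho> ^ s) + X)"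
    using K r0 by (intro mult_left_mono) auto
  ultimately show ?thesis by (simp add: distrib_left)
qed

lemma chain_ineq:
  fixes \<rho> A d :: real and M :: nat
  assumes M1: "M \<ge> 1" and d0: "d > 0" and rd: "\<rho> \<le> A + d"
  shows "\<rho> * (\<Sum>k\<in>{1..M}. (1 / d ^ k)\<^sup>2) \<le> (A + cos (pi / (real M + 1))) * (\<Sum>k\<in>{1..M}. (1 / d ^ k)\<^sup>2) + 1 / d"
proof -
  define t where "t k = 1 / d ^ k" for k :: nat
  define y where "y k = (if k = 0 then 0 else t k)" for k
  have step: "\<rho> * (t k)\<^sup>2 \<le> A * (t k)\<^sup>2 + t k * t (k - 1)" if "k \<in> {1..M}" for k
  proof -
    have "t (k - 1) = d * t k" using that d0 unfolding t_def
      by (cases k) (auto simp: field_simps)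
    moreover have "\<rho> * (t k)\<^sup>2 \<le> (A + d) * (t k)\<^sup>2" using rd by (intro mult_right_mono) auto
    ultimately show ?thesis by (simp add: algebra_simps power2_eq_square)
  qed
  have "\<rho> * (\<Sum>k\<in>{1..M}. (t k)\<^sup>2) \<le> A * (\<Sum>k\<in>{1..M}. (t k)\<^sup>2) + (\<Sum>k\<in>{1..M}. t k * t (k - 1))"
    unfolding sum_distrib_left sum.distrib[symmetric] by (rule sum_mono) (rule step)
  moreover have "(\<Sum>k\<in>{1..M}. t k * t (k - 1)) = t 1 + (\<Sum>k\<in>{1..M}. y k * y (k - 1))"
  proof -
    have "(\<Sum>k\<in>{1..M}. t k * t (k - 1)) = (\<Sum>k\<in>{1..M}. (if k = 1 then t 1 else 0) + y k * y (k - 1))"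
      by (intro sum.cong refl) (auto simp: y_def t_def)
    also have "\<dots> = t 1 + (\<Sum>k\<in>{1..M}. y k * y (k - 1))"
      using M1 by (simp add: sum.distrib)
    finally show ?thesis .
  qed
  moreover have "(\<Sum>k\<in>{1..M}. y k * y (k - 1)) \<le> cos (pi / (real M + 1)) * (\<Sum>k\<in>{1..M}. (y k)\<^sup>2)"
    by (rule path_ineq) (use M1 in \<open>simp_all add: y_def\<close>)
  moreover have "(\<Sum>k\<in>{1..M}. (y k)\<^sup>2) = (\<Sum>k\<in>{1..M}. (t k)\<^sup>2)"
    by (intro sum.cong refl) (auto simp: y_def)
  moreover have "t 1 = 1 / d" by (simp add: t_def)
  ultimately show ?thesis unfolding t_def[symmetric] by (simp add: algebra_simps)
qed

theorem theorem3p9: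
  fixes m n :: nat
    and C :: "nat \<Rightarrow> complex^'p^'p"
    and a :: "nat \<Rightarrow> complex"
    and mj :: "nat \<Rightarrow> nat"
    and B :: "nat \<Rightarrow> nat \<Rightarrow> complex^'p^'p"
    and N :: "complex^'p \<Rightarrow> real"
    and l0 :: complex
  assumes "m \<ge> 1" and "n \<ge> 1"
    and "inj_on a {1..n}"
    and "\<forall>j\<in>{1..n}. mj j \<ge> 1"
    and "is_vec_norm N"
    and "is_eigenvalue_R m C n a mj B l0"
  shows
    "(cmod l0 \<le> max (Max ((\<lambda>j. 1 + cmod (a j)) ` {1..n}))
        ((\<Sum>j\<in>{1..n}. \<Sum>k\<in>{1..mj j}. induced_norm N (B j k))
          + (\<Sum>i<m. induced_norm N (C i))))
  \<and>
    (if (\<forall>j\<in>{1..n}. mj j = 1) then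
        cmod l0 \<le> Max ((\<lambda>j. cmod (a j) + induced_norm N (B j 1)) ` {1..n}
                      \<union> (\<lambda>i. 1 + induced_norm N (C i)) ` {1..m-1}
                      \<union> {induced_norm N (C 0) + real n})
      else
        cmod l0 \<le> Max ((\<Union>j\<in>{1..n}. (\<lambda>k. cmod (a j) + induced_norm N (B j k)) ` {1..mj j})
                      \<union> (\<lambda>j. 1 + cmod (a j)) ` {1..n}
                      \<union> (\<lambda>i. 1 + induced_norm N (C i)) ` {1..m-1}
                      \<union> {induced_norm N (C 0) + real (\<Sum>j\<in>{1..n}. mj j)}))
  \<and>
    (let \<alpha> = Max ((\<lambda>j. cmod (a j) + cos (pi / (real (mj j) + 1))) ` {1..n});
          \<beta> = num_radius m (\<lambda>r s. complex_of_real
                  (B0mat m (\<lambda>i. induced_norm N (C i)) r s));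
          \<gamma> = sqrt (real (\<Sum>j\<in>{1..n}. mj j));
          \<delta> = sqrt (\<Sum>j\<in>{1..n}. \<Sum>k\<in>{1..mj j}. (induced_norm N (B j k))\<^sup>2)
      in cmod l0 \<le> (\<alpha> + \<beta> + sqrt ((\<alpha> - \<beta>)\<^sup>2 + (\<gamma> + \<delta>)\<^sup>2)) / 2)"
proof -
  note m1 = assms(1) and n1 = assms(2) and mj1 = assms(4) and h = assms(5) and ev = assms(6)
  define \<rho> where "\<rho> = cmod l0"
  define c where "c = (\<lambda>i. induced_norm N (C i))"
  define b where "b = (\<lambda>j k. induced_norm N (B j k))"
  define d where "d = (\<lambda>j. cmod (l0 - a j))"
  have r0: "\<rho> \<ge> 0" by (simp add: \<rho>_def)
  have c0: "c i \<ge> 0" for i unfolding c_def by (rule induced_norm_nonneg[OF h])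
  have b0: "b j k \<ge> 0" for j k unfolding b_def by (rule induced_norm_nonneg[OF h])
  have K: "\<rho> ^ m \<le> (\<Sum>i<m. c i * \<rho> ^ i) + (\<Sum>j\<in>{1..n}. \<Sum>k\<in>{1..mj j}. b j k / d j ^ k)"
    unfolding \<rho>_def c_def b_def d_def by (rule key_ineq[OF h ev])
  have d0: "d j > 0" if "j \<in> {1..n}" for j
    using ev that unfolding is_eigenvalue_R_def d_def by auto
  have dA: "d j \<ge> \<rho> - cmod (a j)" for j
    unfolding d_def \<rho>_def by (rule norm_triangle_ineq2)
  have dA2: "\<rho> \<le> cmod (a j) + d j" for j
    unfolding d_def \<rho>_def using norm_triangle_ineq[of "a j" "l0 - a j"] by simp
  have P1: "\<rho> \<le> max (Max ((\<lambda>j. 1 + cmod (a j)) ` {1..n}))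
        ((\<Sum>j\<in>{1..n}. \<Sum>k\<in>{1..mj j}. b j k) + (\<Sum>i<m. c i))"
    by (rule part1_real[OF K m1 n1 c0 b0 norm_ge_zero dA])
  have P2: "if (\<forall>j\<in>{1..n}. mj j = 1) then
        \<rho> \<le> Max ((\<lambda>j. cmod (a j) + b j 1) ` {1..n}
                      \<union> (\<lambda>i. 1 + c i) ` {1..m-1}
                      \<union> {c 0 + real n})
      else
        \<rho> \<le> Max ((\<Union>j\<in>{1..n}. (\<lambda>k. cmod (a j) + b j k) ` {1..mj j})
                      \<union> (\<lambda>j. 1 + cmod (a j)) ` {1..n}
                      \<union> (\<lambda>i. 1 + c i) ` {1..m-1}
                      \<union> {c 0 + real (\<Sum>j\<in>{1..n}. mj j)})"
  proof (cases "\<forall>j\<in>{1..n}. mj j = 1")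
    case True
    define X where "X = (\<lambda>j. cmod (a j) + b j 1) ` {1..n} \<union> (\<lambda>i. 1 + c i) ` {1..m-1} \<union> {c 0 + real n}"
    have fX: "finite X" unfolding X_def by simp
    have "\<rho> \<le> Max X"
    proof (rule ccontr)
      assume "\<not> \<rho> \<le> Max X"
      then have lt: "x < \<rho>" if "x \<in> X" for x using Max_ge[OF fX that] by linarith
      have "(\<Sum>j\<in>{1..n}. \<Sum>k\<in>{1..mj j}. b j k / d j ^ k) \<le> (\<Sum>j\<in>{1..n}. 1)"
      proof (rule sum_mono)
        fix j assume j: "j \<in> {1..n}"
        have "cmod (a j) + b j 1 < \<rho>" using lt j unfolding X_def by blast
        then have "b j 1 \<le> d j" using dA[of j] by linarith
        then show "(\<Sum>k\<in>{1..mj j}. b j k / d j ^ k) \<le> 1" using True j d0[OF j] by simp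
      qed
      then have XS: "(\<Sum>j\<in>{1..n}. \<Sum>k\<in>{1..mj j}. b j k / d j ^ k) \<le> real n" by simp
      show False
      proof (rule part2_real[OF K m1 r0 _ XS])
        show "c i \<le> \<rho> - 1" if "i \<in> {1..m-1}" for i using lt[of "1 + c i"] that unfolding X_def by auto
        show "c 0 + real n < \<rho>" using lt unfolding X_def by auto
      qed
    qed
    then show ?thesis unfolding if_P[OF True] X_def .
  next
    case False
    define X where "X = (\<Union>j\<in>{1..n}. (\<lambda>k. cmod (a j) + b j k) ` {1..mj j})
                      \<union> (\<lambda>j. 1 + cmod (a j)) ` {1..n}
                      \<union> (\<lambda>i. 1 + c i) ` {1..m-1}
                      \<union> {c 0 + real (\<Sum>j\<in>{1..n}. mj j)}"
    have fX: "finite X" unfolding X_def by simp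
    have "\<rho> \<le> Max X"
    proof (rule ccontr)
      assume "\<not> \<rho> \<le> Max X"
      then have lt: "x < \<rho>" if "x \<in> X" for x using Max_ge[OF fX that] by linarith
      have "(\<Sum>j\<in>{1..n}. \<Sum>k\<in>{1..mj j}. b j k / d j ^ k) \<le> (\<Sum>j\<in>{1..n}. \<Sum>k\<in>{1..mj j}. 1)"
      proof (intro sum_mono)
        fix j k assume j: "j \<in> {1..n}" and k: "k \<in> {1..mj j}"
        have "cmod (a j) + b j k < \<rho>" using lt j k unfolding X_def by blast
        then have bd: "b j k \<le> d j" using dA[of j] by linarith
        have "1 + cmod (a j) < \<rho>" using lt j unfolding X_def by blast
        then have d1: "1 \<le> d j" using dA[of j] by linarith
        have "d j ^ 1 \<le> d j ^ k" using k d1 by (intro power_increasing) auto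
        then have "b j k \<le> d j ^ k" using bd by simp
        then show "b j k / d j ^ k \<le> 1" using d1 by (simp add: divide_le_eq)
      qed
      then have XS: "(\<Sum>j\<in>{1..n}. \<Sum>k\<in>{1..mj j}. b j k / d j ^ k) \<le> real (\<Sum>j\<in>{1..n}. mj j)" by simp
      show False
      proof (rule part2_real[OF K m1 r0 _ XS])
        show "c i \<le> \<rho> - 1" if "i \<in> {1..m-1}" for i using lt[of "1 + c i"] that unfolding X_def by auto
        show "c 0 + real (\<Sum>j\<in>{1..n}. mj j) < \<rho>" using lt unfolding X_def by auto
      qed
    qed
    then show ?thesis unfolding if_not_P[OF False] X_def .
  qed
  have P3: "\<rho> \<le> (\<alpha> + \<beta> + sqrt ((\<alpha> - \<beta>)\<^sup>2 + (\<gamma> + \<delta>)\<^sup>2)) / 2"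
    if \<alpha>: "\<alpha> = Max ((\<lambda>j. cmod (a j) + cos (pi / (real (mj j) + 1))) ` {1..n})"
    and \<beta>: "\<beta> = num_radius m (\<lambda>r s. complex_of_real (B0mat m c r s))"
    and \<gamma>: "\<gamma> = sqrt (real (\<Sum>j\<in>{1..n}. mj j))"
    and \<delta>: "\<delta> = sqrt (\<Sum>j\<in>{1..n}. \<Sum>k\<in>{1..mj j}. (b j k)\<^sup>2)"
    for \<alpha> \<beta> \<gamma> \<delta>
  proof -
    obtain m' where mm: "m = Suc m'" using m1 by (cases m) auto
    define t where "t j k = 1 / d j ^ k" for j k
    define A2 where "A2 = (\<Sum>i<m. (\<rho> ^ i)\<^sup>2)"
    define T where "T j = (\<Sum>k\<in>{1..mj j}. (t j k)\<^sup>2)" for j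
    define T2 where "T2 = (\<Sum>j\<in>{1..n}. T j)"
    define X where "X = (\<Sum>j\<in>{1..n}. \<Sum>k\<in>{1..mj j}. b j k * t j k)"
    define QB where "QB = (\<Sum>r<m. \<Sum>s<m. \<rho> ^ r * B0mat m c r s * \<rho> ^ s)"
    have t0: "t j k \<ge> 0" if "j \<in> {1..n}" for j k unfolding t_def using d0[OF that] by simp
    have T0: "T j \<ge> 0" for j unfolding T_def by (intro sum_nonneg) simp
    have T20: "T2 \<ge> 0" unfolding T2_def using T0 by (intro sum_nonneg) auto
    have X0: "X \<ge> 0" unfolding X_def using b0 t0 by (intro sum_nonneg mult_nonneg_nonneg) auto
    have A2ge: "(\<rho> ^ i)\<^sup>2 \<le> A2" if "i < m" for i
      unfolding A2_def by (rule member_le_sum) (use that in auto)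
    have A2_1: "1 \<le> A2" using A2ge[of 0] m1 by simp
    have sA1: "1 \<le> sqrt A2" using A2_1 by simp
    have sAm: "\<rho> ^ m' \<le> sqrt A2" using A2ge[of m'] mm by (intro real_le_rsqrt) auto
    have K': "\<rho> ^ Suc m' \<le> (\<Sum>i<Suc m'. c i * \<rho> ^ i) + X"
      using K unfolding mm X_def t_def by (simp add: divide_inverse)
    have row: "\<rho> * A2 \<le> QB + \<rho> ^ m' * X"
      using row_ineq[OF r0 K'] unfolding A2_def QB_def mm .
    have QBb: "QB \<le> \<beta> * A2"
      unfolding QB_def A2_def \<beta> using A2_1 unfolding A2_def
      by (intro num_radius_quad) simp
    have chainj: "\<rho> * T j \<le> \<alpha> * T j + 1 / d j" if j: "j \<in> {1..n}" for j
    proof -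
      have "\<rho> * T j \<le> (cmod (a j) + cos (pi / (real (mj j) + 1))) * T j + 1 / d j"
        unfolding T_def t_def using mj1 j d0[OF j] dA2[of j] by (intro chain_ineq) auto
      moreover have "cmod (a j) + cos (pi / (real (mj j) + 1)) \<le> \<alpha>"
        unfolding \<alpha> using j by (intro Max_ge) auto
      ultimately show ?thesis using T0[of j] by (meson add_le_cancel_right mult_right_mono order_trans)
    qed
    have chain: "\<rho> * T2 \<le> \<alpha> * T2 + (\<Sum>j\<in>{1..n}. 1 / d j)"
      unfolding T2_def sum_distrib_left sum.distrib[symmetric] by (rule sum_mono) (rule chainj)
    have CS1: "X \<le> \<delta> * sqrt T2"
    proof -
      have "X \<le> (\<Sum>j\<in>{1..n}. sqrt (\<Sum>k\<in>{1..mj j}. (b j k)\<^sup>2) * sqrt (T j))"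
        unfolding X_def
      proof (rule sum_mono)
        fix j assume j: "j \<in> {1..n}"
        have "(\<Sum>k\<in>{1..mj j}. b j k * t j k) = (\<Sum>k\<in>{1..mj j}. \<bar>b j k\<bar> * \<bar>t j k\<bar>)"
          using b0 t0[OF j] by simp
        also have "\<dots> \<le> L2_set (b j) {1..mj j} * L2_set (t j) {1..mj j}" by (rule L2_set_mult_ineq)
        finally show "(\<Sum>k\<in>{1..mj j}. b j k * t j k) \<le> sqrt (\<Sum>k\<in>{1..mj j}. (b j k)\<^sup>2) * sqrt (T j)"
          by (simp add: L2_set_def T_def)
      qed
      also have "\<dots> = (\<Sum>j\<in>{1..n}. \<bar>sqrt (\<Sum>k\<in>{1..mj j}. (b j k)\<^sup>2)\<bar> * \<bar>sqrt (T j)\<bar>)"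
        using T0 by (intro sum.cong refl) (simp add: sum_nonneg)
      also have "\<dots> \<le> L2_set (\<lambda>j. sqrt (\<Sum>k\<in>{1..mj j}. (b j k)\<^sup>2)) {1..n} * L2_set (\<lambda>j. sqrt (T j)) {1..n}"
        by (rule L2_set_mult_ineq)
      also have "\<dots> = \<delta> * sqrt T2"
        unfolding L2_set_def \<delta> T2_def using T0 by (simp add: sum_nonneg)
      finally show ?thesis .
    qed
    have CS2: "(\<Sum>j\<in>{1..n}. 1 / d j) \<le> \<gamma> * sqrt T2"
    proof -
      have "(\<Sum>j\<in>{1..n}. 1 / d j) = (\<Sum>j\<in>{1..n}. \<bar>1\<bar> * \<bar>t j 1\<bar>)"
        by (intro sum.cong refl) (simp add: t_def d_def)
      also have "\<dots> \<le> L2_set (\<lambda>_. 1) {1..n} * L2_set (\<lambda>j. t j 1) {1..n}"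
        by (rule L2_set_mult_ineq)
      also have "\<dots> \<le> \<gamma> * sqrt T2"
      proof (rule mult_mono)
        have "real n \<le> real (\<Sum>j\<in>{1..n}. mj j)"
        proof -
          have "(\<Sum>j\<in>{1..n}. (1::nat)) \<le> (\<Sum>j\<in>{1..n}. mj j)" using mj1 by (intro sum_mono) auto
          then show ?thesis by (simp only: of_nat_le_iff) simp
        qed
        then show "L2_set (\<lambda>_. 1) {1..n} \<le> \<gamma>" unfolding L2_set_def \<gamma> by simp
        have "(\<Sum>j\<in>{1..n}. (t j 1)\<^sup>2) \<le> T2" unfolding T2_def T_def
          using mj1 by (intro sum_mono member_le_sum) auto
        then show "L2_set (\<lambda>j. t j 1) {1..n} \<le> sqrt T2" unfolding L2_set_def by simp
      qed (simp_all add: \<gamma> sum_nonneg)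
      finally show ?thesis .
    qed
    have "\<rho> * (A2 + T2) \<le> \<beta> * A2 + \<alpha> * T2 + (\<gamma> + \<delta>) * (sqrt A2 * sqrt T2)"
    proof -
      have "\<rho> ^ m' * X \<le> sqrt A2 * X" using sAm X0 by (intro mult_right_mono)
      also have "\<dots> \<le> sqrt A2 * (\<delta> * sqrt T2)" using CS1 A2_1 by (intro mult_left_mono) auto
      finally have e1: "\<rho> ^ m' * X \<le> \<delta> * (sqrt A2 * sqrt T2)" by (simp add: mult_ac)
      have "\<gamma> * sqrt T2 \<le> sqrt A2 * (\<gamma> * sqrt T2)"
      proof -
        have "0 \<le> \<gamma> * sqrt T2" using T20 by (simp add: \<gamma> sum_nonneg)
        then show ?thesis using sA1 mult_right_mono[OF sA1, of "\<gamma> * sqrt T2"] by simp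
      qed
      then have e2: "(\<Sum>j\<in>{1..n}. 1 / d j) \<le> \<gamma> * (sqrt A2 * sqrt T2)" using CS2 by (simp add: mult_ac)
      show ?thesis using row QBb chain e1 e2 by (simp add: algebra_simps)
    qed
    then show ?thesis by (rule two_by_two) (use A2_1 T20 in \<open>simp_all add: \<gamma> \<delta> sum_nonneg\<close>)
  qed
  show ?thesis
    using P1 P2 P3 unfolding \<rho>_def c_def b_def Let_def by simp
qed

end
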